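(* Assume $\mathsf{X}=\mathsf{Y}$ is finite and $D\ge0$ with $\mathcal{G}(D)\neq\emptyset$. Let $P^*_{X,Y}\in\mathcal{G}(D)$ attain $I(\mu\|\psi,D)=\min\{I(X;Y):P_{X,Y}\in\mathcal{G}(D)\}$, and let $H^*(Y|X)$ be the conditional entropy under $P^*_{X,Y}$. Then for every $R_c\ge H^*(Y|X)$, $$\min\{R:(R,R_c)\in\mathcal{L}(D)\}=I(\mu\|\psi,D),$$ and $\{R:(R,R_c)\in\mathcal{L}(D)\}=\{R: R\ge I(\mu\|\psi,D)\}$, which is also the set of $R$ for which $(R,R_c')\in\mathcal{L}(D)$ for some $R_c'$ arbitrarily large.
   Context: $\mathsf{X}=\mathsf{Y}$ finite, $\rho$ a distortion measure, $\mu,\psi$ distributions on $\mathsf{X}$. $\mathcal{G}(D):=\{P_{X,Y}: P_X=\mu,\ P_Y=\psi,\ \mathbb{E}[\rho(X,Y)]\le D\}$. $\mathcal{M}(D):=\{P_{X,Y,U}: P_X=\mu,\ P_Y=\psi,\ \mathbb{E}[\rho(X,Y)]\le D,\ X-U-Y\text{ Markov},\ |\mathsf{U}|\le|\mathsf{X}|+|\mathsf{Y}|+1\}$, and $\mathcal{L}(D):=\{(R,R_c)\in\mathbb{R}^2:\exists P_{X,Y,U}\in\mathcal{M}(D)\text{ with } R\ge I(X;U),\ R+R_c\ge I(Y;U)\}$. *)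

theory Defs
  imports "HOL-Analysis.Analysis"
begin

(* Finite alphabets: X = Y is the finite type 'a; the auxiliary alphabet U is
   {..< u_bound TYPE('a)} (a set of naturals), i.e. |U| <= |X| + |Y| + 1.
   Distributions are nonnegative real-valued mass functions. *)

definition is_dist :: "('a::finite \<Rightarrow> real) \<Rightarrow> bool" where
  "is_dist p \<longleftrightarrow> (\<forall>x. 0 \<le> p x) \<and> (\<Sum>x\<in>UNIV. p x) = 1"

definition mutual_info :: "'b set \<Rightarrow> 'c set \<Rightarrow> ('b \<Rightarrow> 'c \<Rightarrow> real) \<Rightarrow> real" where
  "mutual_info A B Q =
     (\<Sum>a\<in>A. \<Sum>b\<in>B. if Q a b > 0
        then Q a b * log 2 (Q a b / ((\<Sum>b'\<in>B. Q a b') * (\<Sum>a'\<in>A. Q a' b)))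
        else 0)"

definition cond_entropy :: "('a::finite \<Rightarrow> 'b::finite \<Rightarrow> real) \<Rightarrow> real" where
  "cond_entropy Q =
     - (\<Sum>x\<in>UNIV. \<Sum>y\<in>UNIV. if Q x y > 0
          then Q x y * log 2 (Q x y / (\<Sum>y'\<in>UNIV. Q x y'))
          else 0)"

definition G_set :: "('a::finite \<Rightarrow> 'a \<Rightarrow> real) \<Rightarrow> ('a \<Rightarrow> real) \<Rightarrow> ('a \<Rightarrow> real) \<Rightarrow> real
                      \<Rightarrow> ('a \<Rightarrow> 'a \<Rightarrow> real) set" where
  "G_set \<rho> \<mu> \<psi> D = {P. (\<forall>x y. 0 \<le> P x y)
                       \<and> (\<forall>x. (\<Sum>y\<in>UNIV. P x y) = \<mu> x)
                       \<and> (\<forall>y. (\<Sum>x\<in>UNIV. P x y) = \<psi> y)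
                       \<and> (\<Sum>x\<in>UNIV. \<Sum>y\<in>UNIV. P x y * \<rho> x y) \<le> D}"

definition u_bound :: "'a::finite itself \<Rightarrow> nat" where
  "u_bound _ = CARD('a) + CARD('a) + 1"

definition marg_XU :: "('a::finite \<Rightarrow> nat \<Rightarrow> 'a \<Rightarrow> real) \<Rightarrow> 'a \<Rightarrow> nat \<Rightarrow> real" where
  "marg_XU P x u = (\<Sum>y\<in>UNIV. P x u y)"

definition marg_UY :: "('a::finite \<Rightarrow> nat \<Rightarrow> 'a \<Rightarrow> real) \<Rightarrow> nat \<Rightarrow> 'a \<Rightarrow> real" where
  "marg_UY P u y = (\<Sum>x\<in>UNIV. P x u y)"

definition marg_U :: "('a::finite \<Rightarrow> nat \<Rightarrow> 'a \<Rightarrow> real) \<Rightarrow> nat \<Rightarrow> real" where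
  "marg_U P u = (\<Sum>x\<in>UNIV. \<Sum>y\<in>UNIV. P x u y)"

definition M_set :: "('a::finite \<Rightarrow> 'a \<Rightarrow> real) \<Rightarrow> ('a \<Rightarrow> real) \<Rightarrow> ('a \<Rightarrow> real) \<Rightarrow> real
                      \<Rightarrow> ('a \<Rightarrow> nat \<Rightarrow> 'a \<Rightarrow> real) set" where
  "M_set \<rho> \<mu> \<psi> D = {P. (\<forall>x u y. 0 \<le> P x u y)
      \<and> (\<forall>x u y. u \<ge> u_bound TYPE('a) \<longrightarrow> P x u y = 0)
      \<and> (\<forall>x. (\<Sum>u<u_bound TYPE('a). \<Sum>y\<in>UNIV. P x u y) = \<mu> x)
      \<and> (\<forall>y. (\<Sum>x\<in>UNIV. \<Sum>u<u_bound TYPE('a). P x u y) = \<psi> y)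
      \<and> (\<Sum>x\<in>UNIV. \<Sum>u<u_bound TYPE('a). \<Sum>y\<in>UNIV. P x u y * \<rho> x y) \<le> D
      \<and> (\<forall>x u y. P x u y * marg_U P u = marg_XU P x u * marg_UY P u y)}"

definition L_set :: "('a::finite \<Rightarrow> 'a \<Rightarrow> real) \<Rightarrow> ('a \<Rightarrow> real) \<Rightarrow> ('a \<Rightarrow> real) \<Rightarrow> real
                      \<Rightarrow> (real \<times> real) set" where
  "L_set \<rho> \<mu> \<psi> D = {(R, Rc). \<exists>P\<in>M_set \<rho> \<mu> \<psi> D.
       R \<ge> mutual_info UNIV {..<u_bound TYPE('a)} (marg_XU P)
     \<and> R + Rc \<ge> mutual_info {..<u_bound TYPE('a)} UNIV (marg_UY P)}"

end

theory Submission imports Defs begin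

lemma if_pos_mult: "0 \<le> (q::real) \<Longrightarrow> (if q > 0 then q * L else 0) = q * L"
  by auto

lemma mi_simp:
  assumes "\<forall>a b. 0 \<le> Q a b"
  shows "mutual_info A B Q = (\<Sum>a\<in>A. \<Sum>b\<in>B. Q a b * log 2 (Q a b / ((\<Sum>b'\<in>B. Q a b') * (\<Sum>a'\<in>A. Q a' b))))"
  unfolding mutual_info_def using assms by (intro sum.cong refl) (simp add: if_pos_mult)

lemma ce_simp:
  assumes "\<forall>a b. 0 \<le> Q a b"
  shows "cond_entropy Q = - (\<Sum>x\<in>UNIV. \<Sum>y\<in>UNIV. Q x y * log 2 (Q x y / (\<Sum>y'\<in>UNIV. Q x y')))"
  unfolding cond_entropy_def using assms by (intro arg_cong[where f=uminus] sum.cong refl) (simp add: if_pos_mult)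

lemma mi_G:
  assumes "Q \<in> G_set \<rho> \<mu> \<psi> D"
  shows "mutual_info UNIV UNIV Q = (\<Sum>x\<in>UNIV. \<Sum>y\<in>UNIV. Q x y * log 2 (Q x y / (\<mu> x * \<psi> y)))"
  using assms unfolding G_set_def by (subst mi_simp) auto

lemma M_facts:
  fixes P :: "'a::finite \<Rightarrow> nat \<Rightarrow> 'a \<Rightarrow> real"
  assumes "P \<in> M_set \<rho> \<mu> \<psi> D"
  shows "\<And>x u y. 0 \<le> P x u y"
    and "\<And>x u y. u \<ge> u_bound TYPE('a) \<Longrightarrow> P x u y = 0"
    and "\<And>x. (\<Sum>u<u_bound TYPE('a). \<Sum>y\<in>UNIV. P x u y) = \<mu> x"
    and "\<And>y. (\<Sum>x\<in>UNIV. \<Sum>u<u_bound TYPE('a). P x u y) = \<psi> y"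
    and "(\<Sum>x\<in>UNIV. \<Sum>u<u_bound TYPE('a). \<Sum>y\<in>UNIV. P x u y * \<rho> x y) \<le> D"
    and "\<And>x u y. P x u y * marg_U P u = marg_XU P x u * marg_UY P u y"
  using assms unfolding M_set_def mem_Collect_eq by blast+

lemma mi_XU:
  fixes P :: "'a::finite \<Rightarrow> nat \<Rightarrow> 'a \<Rightarrow> real"
  assumes "P \<in> M_set \<rho> \<mu> \<psi> D"
  shows "mutual_info UNIV {..<u_bound TYPE('a)} (marg_XU P) =
    (\<Sum>x\<in>UNIV. \<Sum>u<u_bound TYPE('a). marg_XU P x u * log 2 (marg_XU P x u / (\<mu> x * marg_U P u)))"
proof -
  note F = M_facts[OF assms]
  have nn: "\<forall>a b. 0 \<le> marg_XU P a b" unfolding marg_XU_def using F(1) by (blast intro: sum_nonneg)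
  have r: "(\<Sum>u<u_bound TYPE('a). marg_XU P x u) = \<mu> x" for x unfolding marg_XU_def by (rule F(3))
  have c: "(\<Sum>x\<in>UNIV. marg_XU P x u) = marg_U P u" for u unfolding marg_XU_def marg_U_def by (rule refl)
  show ?thesis unfolding mi_simp[OF nn] r c ..
qed

lemma mi_UY:
  fixes P :: "'a::finite \<Rightarrow> nat \<Rightarrow> 'a \<Rightarrow> real"
  assumes "P \<in> M_set \<rho> \<mu> \<psi> D"
  shows "mutual_info {..<u_bound TYPE('a)} UNIV (marg_UY P) =
    (\<Sum>u<u_bound TYPE('a). \<Sum>y\<in>UNIV. marg_UY P u y * log 2 (marg_UY P u y / (marg_U P u * \<psi> y)))"
proof -
  note F = M_facts[OF assms]
  have nn: "\<forall>a b. 0 \<le> marg_UY P a b" unfolding marg_UY_def using F(1) by (blast intro: sum_nonneg)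
  have r: "(\<Sum>u<u_bound TYPE('a). marg_UY P u y) = \<psi> y" for y unfolding marg_UY_def
    by (subst sum.swap) (rule F(4))
  have c: "(\<Sum>y\<in>UNIV. marg_UY P u y) = marg_U P u" for u unfolding marg_UY_def marg_U_def
    by (rule sum.swap)
  show ?thesis unfolding mi_simp[OF nn] r c ..
qed

lemma key:
  fixes p a c m q s e :: real
  assumes p0: "0 \<le> p" and pos: "p > 0 \<Longrightarrow> a > 0 \<and> c > 0 \<and> m > 0 \<and> q > 0 \<and> s > 0"
    and mk: "p * c = a * e" and e0: "0 \<le> e" and q0: "0 \<le> q" and s0: "0 \<le> s"
  shows "(p - e * q / s) / ln 2 \<le> p * log 2 (a / (m * c)) - p * log 2 (q / (m * s))"
proof (cases "p = 0")
  case True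
  have "0 \<le> e * q / s" using e0 q0 s0 by simp
  then show ?thesis using True e0 q0 s0 by simp
next
  case False
  then have "p > 0" using p0 by simp
  with pos have a: "a > 0" and c: "c > 0" and m: "m > 0" and q: "q > 0" and s: "s > 0" by auto
  define z where "z = a * s / (c * q)"
  have z: "z > 0" unfolding z_def using a c q s by simp
  have L: "log 2 (a / (m * c)) - log 2 (q / (m * s)) = ln z / ln 2"
    unfolding z_def log_def using a c q s m
    by (simp add: ln_div ln_mult diff_divide_distrib add_divide_distrib)
  have "ln (1 / z) \<le> 1 / z - 1" using z by (intro ln_le_minus_one) simp
  then have lz: "1 - 1 / z \<le> ln z" using z by (simp add: ln_div)
  have "p * (1 - 1/z) = p - e * q / s"
    unfolding z_def using a c q s mk by (simp add: field_simps)
  then have "p - e * q / s \<le> p * ln z" using lz \<open>p > 0\<close> by (metis mult_left_mono less_imp_le)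
  then have "(p - e * q / s) / ln 2 \<le> p * (ln z / ln 2)" by (simp add: divide_right_mono)
  also have "\<dots> = p * log 2 (a / (m * c)) - p * log 2 (q / (m * s))" using L by (simp add: right_diff_distrib[symmetric])
  finally show ?thesis .
qed

lemma converse:
  fixes P :: "'a::finite \<Rightarrow> nat \<Rightarrow> 'a \<Rightarrow> real"
  assumes PM: "P \<in> M_set \<rho> \<mu> \<psi> D" and mu: "is_dist \<mu>" and psi: "is_dist \<psi>"
  defines "Q \<equiv> (\<lambda>x y. \<Sum>u<u_bound TYPE('a). P x u y)"
  shows "Q \<in> G_set \<rho> \<mu> \<psi> D"
    and "mutual_info UNIV UNIV Q \<le> mutual_info UNIV {..<u_bound TYPE('a)} (marg_XU P)"
proof -
  note F = M_facts[OF PM]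
  let ?n = "u_bound TYPE('a)"
  have Qnn: "0 \<le> Q x y" for x y unfolding Q_def using F(1) by (simp add: sum_nonneg)
  have Qr: "(\<Sum>y\<in>UNIV. Q x y) = \<mu> x" for x unfolding Q_def using F(3)[of x] by (metis sum.swap)
  have Qc: "(\<Sum>x\<in>UNIV. Q x y) = \<psi> y" for y unfolding Q_def using F(4)[of y] by simp
  have "(\<Sum>x\<in>UNIV. \<Sum>y\<in>UNIV. Q x y * \<rho> x y) = (\<Sum>x\<in>UNIV. \<Sum>u<?n. \<Sum>y\<in>UNIV. P x u y * \<rho> x y)"
    unfolding Q_def by (simp add: sum_distrib_right sum.swap[of _ UNIV "{..<?n}"])
  then have Qd: "(\<Sum>x\<in>UNIV. \<Sum>y\<in>UNIV. Q x y * \<rho> x y) \<le> D" using F(5) by simp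
  show QG: "Q \<in> G_set \<rho> \<mu> \<psi> D" unfolding G_set_def using Qnn Qr Qc Qd by blast
  define la where "la x u = log 2 (marg_XU P x u / (\<mu> x * marg_U P u))" for x u
  define lb where "lb x y = log 2 (Q x y / (\<mu> x * \<psi> y))" for x y
  have IU: "mutual_info UNIV {..<?n} (marg_XU P) = (\<Sum>x\<in>UNIV. \<Sum>u<?n. \<Sum>y\<in>UNIV. P x u y * la x u)"
    unfolding mi_XU[OF PM] la_def marg_XU_def by (simp add: sum_distrib_right)
  have IY: "mutual_info UNIV UNIV Q = (\<Sum>x\<in>UNIV. \<Sum>u<?n. \<Sum>y\<in>UNIV. P x u y * lb x y)"
    unfolding mi_G[OF QG] lb_def[symmetric]
    by (simp add: Q_def sum_distrib_right sum.swap[of _ UNIV "{..<?n}"])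
  have le_sum: "f i \<le> sum f A" if "finite A" "i \<in> A" "\<forall>j. 0 \<le> f j" for f :: "'b \<Rightarrow> real" and i A
    using that by (intro member_le_sum) auto
  have pt: "(P x u y - marg_UY P u y * Q x y / \<psi> y) / ln 2 \<le> P x u y * la x u - P x u y * lb x y"
    if u: "u < ?n" for x u y
    unfolding la_def lb_def
  proof (rule key)
    show "0 \<le> P x u y" by (rule F(1))
    show "P x u y * marg_U P u = marg_XU P x u * marg_UY P u y" by (rule F(6))
    show "0 \<le> marg_UY P u y" unfolding marg_UY_def using F(1) by (simp add: sum_nonneg)
    show "0 \<le> Q x y" by (rule Qnn)
    show "0 \<le> \<psi> y" using Qnn Qc[of y] by (metis sum_nonneg)
    assume p: "P x u y > 0"
    have a: "P x u y \<le> marg_XU P x u" unfolding marg_XU_def by (rule le_sum) (use F(1) in auto)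
    have b: "marg_XU P x u \<le> marg_U P u" unfolding marg_XU_def marg_U_def
      by (rule le_sum) (use F(1) in \<open>auto intro: sum_nonneg\<close>)
    have c: "marg_XU P x u \<le> \<mu> x" unfolding F(3)[of x, symmetric] marg_XU_def
      by (rule le_sum) (use F(1) u in \<open>auto intro: sum_nonneg\<close>)
    have d: "P x u y \<le> Q x y" unfolding Q_def by (rule le_sum) (use F(1) u in auto)
    have e: "Q x y \<le> \<psi> y" unfolding Qc[of y, symmetric] by (rule le_sum) (use Qnn in auto)
    show "0 < marg_XU P x u \<and> 0 < marg_U P u \<and> 0 < \<mu> x \<and> 0 < Q x y \<and> 0 < \<psi> y"
      using p a b c d e by linarith
  qed
  have "(\<Sum>x\<in>UNIV. \<Sum>u<?n. \<Sum>y\<in>UNIV. (P x u y - marg_UY P u y * Q x y / \<psi> y) / ln 2)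
      \<le> (\<Sum>x\<in>UNIV. \<Sum>u<?n. \<Sum>y\<in>UNIV. P x u y * la x u - P x u y * lb x y)"
    by (intro sum_mono) (use pt in auto)
  also have "\<dots> = mutual_info UNIV {..<?n} (marg_XU P) - mutual_info UNIV UNIV Q"
    unfolding IU IY by (simp add: sum_subtractf)
  finally have ineq: "(\<Sum>x\<in>UNIV. \<Sum>u<?n. \<Sum>y\<in>UNIV. (P x u y - marg_UY P u y * Q x y / \<psi> y) / ln 2)
      \<le> mutual_info UNIV {..<?n} (marg_XU P) - mutual_info UNIV UNIV Q" .
  have s1: "(\<Sum>x\<in>UNIV. \<Sum>u<?n. \<Sum>y\<in>UNIV. P x u y) = 1" using F(3) mu unfolding is_dist_def by simp
  have puy: "(\<Sum>u<?n. marg_UY P u y) = \<psi> y" for y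
    using F(4)[of y] sum.swap[of "\<lambda>x u. P x u y" "{..<?n}" UNIV] unfolding marg_UY_def by simp
  have s2: "(\<Sum>x\<in>UNIV. \<Sum>u<?n. \<Sum>y\<in>UNIV. marg_UY P u y * Q x y / \<psi> y) = 1"
  proof -
    have "(\<Sum>x\<in>UNIV. \<Sum>u<?n. \<Sum>y\<in>UNIV. marg_UY P u y * Q x y / \<psi> y)
        = (\<Sum>y\<in>UNIV. \<Sum>u<?n. \<Sum>x\<in>UNIV. marg_UY P u y * Q x y / \<psi> y)"
      (is "?L = ?R")
    proof -
      have "?L = (\<Sum>x\<in>UNIV. \<Sum>y\<in>UNIV. \<Sum>u<?n. marg_UY P u y * Q x y / \<psi> y)"
        by (intro sum.cong refl) (rule sum.swap)
      also have "\<dots> = (\<Sum>y\<in>UNIV. \<Sum>x\<in>UNIV. \<Sum>u<?n. marg_UY P u y * Q x y / \<psi> y)"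
        by (rule sum.swap)
      also have "\<dots> = ?R"
        by (intro sum.cong refl) (rule sum.swap)
      finally show ?thesis .
    qed
    also have "\<dots> = (\<Sum>y\<in>UNIV. (\<Sum>u<?n. marg_UY P u y) * (\<Sum>x\<in>UNIV. Q x y) / \<psi> y)"
    proof (intro sum.cong refl)
      fix y
      have "(\<Sum>u<?n. \<Sum>x\<in>UNIV. marg_UY P u y * Q x y / \<psi> y) = (\<Sum>u<?n. marg_UY P u y * (\<Sum>x\<in>UNIV. Q x y) / \<psi> y)"
        by (intro sum.cong refl) (simp add: sum_distrib_left sum_divide_distrib)
      also have "\<dots> = (\<Sum>u<?n. marg_UY P u y) * (\<Sum>x\<in>UNIV. Q x y) / \<psi> y"
        by (simp add: sum_distrib_right sum_divide_distrib)
      finally show "(\<Sum>u<?n. \<Sum>x\<in>UNIV. marg_UY P u y * Q x y / \<psi> y) = (\<Sum>u<?n. marg_UY P u y) * (\<Sum>x\<in>UNIV. Q x y) / \<psi> y" .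
    qed
    also have "\<dots> = (\<Sum>y\<in>UNIV. \<psi> y)" unfolding puy Qc by (intro sum.cong refl) simp
    also have "\<dots> = 1" using psi unfolding is_dist_def by simp
    finally show ?thesis .
  qed
  have "(\<Sum>x\<in>UNIV. \<Sum>u<?n. \<Sum>y\<in>UNIV. (P x u y - marg_UY P u y * Q x y / \<psi> y) / ln 2)
      = ((\<Sum>x\<in>UNIV. \<Sum>u<?n. \<Sum>y\<in>UNIV. P x u y) - (\<Sum>x\<in>UNIV. \<Sum>u<?n. \<Sum>y\<in>UNIV. marg_UY P u y * Q x y / \<psi> y)) / ln 2"
    by (simp add: sum_divide_distrib[symmetric] sum_subtractf)
  then have "(\<Sum>x\<in>UNIV. \<Sum>u<?n. \<Sum>y\<in>UNIV. (P x u y - marg_UY P u y * Q x y / \<psi> y) / ln 2) = 0"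
    using s1 s2 by simp
  then show "mutual_info UNIV UNIV Q \<le> mutual_info UNIV {..<?n} (marg_XU P)" using ineq by simp
qed


lemma sum_reidx:
  fixes h :: "'a::finite \<Rightarrow> nat" and f :: "nat \<Rightarrow> real"
  assumes "inj h" "\<And>y. h y < n" "\<And>u. u \<notin> range h \<Longrightarrow> f u = 0"
  shows "(\<Sum>u<n. f u) = (\<Sum>y\<in>UNIV. f (h y))"
proof -
  have "(\<Sum>u\<in>range h. f u) = (\<Sum>u<n. f u)"
    by (rule sum.mono_neutral_left) (use assms in auto)
  moreover have "(\<Sum>u\<in>range h. f u) = (\<Sum>y\<in>UNIV. f (h y))"
    using sum.reindex[of h UNIV f] assms(1) by simp
  ultimately show ?thesis by simp
qed

lemma G_facts:
  assumes "Q \<in> G_set \<rho> \<mu> \<psi> D"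
  shows "\<And>x y. 0 \<le> Q x y" "\<And>x. (\<Sum>y\<in>UNIV. Q x y) = \<mu> x" "\<And>y. (\<Sum>x\<in>UNIV. Q x y) = \<psi> y"
    "(\<Sum>x\<in>UNIV. \<Sum>y\<in>UNIV. Q x y * \<rho> x y) \<le> D"
  using assms unfolding G_set_def mem_Collect_eq by blast+

lemma achiev:
  fixes Pstar :: "'a::finite \<Rightarrow> 'a \<Rightarrow> real"
  assumes PG: "Pstar \<in> G_set \<rho> \<mu> \<psi> D"
  shows "\<exists>P\<in>M_set \<rho> \<mu> \<psi> D. mutual_info UNIV {..<u_bound TYPE('a)} (marg_XU P) = mutual_info UNIV UNIV Pstar
     \<and> mutual_info {..<u_bound TYPE('a)} UNIV (marg_UY P) = mutual_info UNIV UNIV Pstar + cond_entropy Pstar"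
proof -
  note G = G_facts[OF PG]
  let ?n = "u_bound TYPE('a)"
  obtain h where hb: "bij_betw h (UNIV::'a set) {0..<CARD('a)}"
    using ex_bij_betw_finite_nat[of "UNIV::'a set"] by auto
  have inj: "inj h" using hb by (rule bij_betw_imp_inj_on)
  have hlt: "h y < ?n" for y
  proof -
    have "h y \<in> {0..<CARD('a)}" using bij_betw_apply[OF hb] by simp
    then show ?thesis unfolding u_bound_def by simp
  qed
  have heq: "(h y0 = h y) = (y0 = y)" for y0 y using inj by (simp add: inj_eq)
  define P where "P x u y = (if u = h y then Pstar x y else 0)" for x u y
  have del: "(\<Sum>y\<in>UNIV. if h y0 = h y then g y else 0) = g y0" for y0 and g :: "'a \<Rightarrow> real"
    unfolding heq by simp
  have su: "(\<Sum>u<?n. if u = h y then c else 0) = c" for y and c :: real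
    using hlt[of y] by simp
  have mXU_h: "marg_XU P x (h y0) = Pstar x y0" for x y0 unfolding marg_XU_def P_def by (rule del)
  have mXU_o: "marg_XU P x u = 0" if "u \<notin> range h" for x u
    unfolding marg_XU_def P_def using that by (simp add: image_iff)
  have mUY_h: "marg_UY P (h y0) y = (if y = y0 then \<psi> y0 else 0)" for y0 y
    unfolding marg_UY_def P_def heq using G(3)[of y0] by auto
  have mUY_o: "marg_UY P u y = 0" if "u \<notin> range h" for y u
    unfolding marg_UY_def P_def using that by (simp add: image_iff)
  have mU_h: "marg_U P (h y0) = \<psi> y0" for y0
    unfolding marg_U_def P_def del by (rule G(3))
  have mU_o: "marg_U P u = 0" if "u \<notin> range h" for u
    unfolding marg_U_def P_def using that by (simp add: image_iff)
  have PM: "P \<in> M_set \<rho> \<mu> \<psi> D"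
    unfolding M_set_def mem_Collect_eq
  proof (intro conjI allI impI)
    show "0 \<le> P x u y" for x u y unfolding P_def using G(1) by simp
    show "P x u y = 0" if "?n \<le> u" for x u y unfolding P_def using that hlt[of y] by auto
    show "(\<Sum>u<?n. \<Sum>y\<in>UNIV. P x u y) = \<mu> x" for x
    proof -
      have "(\<Sum>u<?n. \<Sum>y\<in>UNIV. P x u y) = (\<Sum>y\<in>UNIV. \<Sum>u<?n. P x u y)" by (rule sum.swap)
      also have "\<dots> = (\<Sum>y\<in>UNIV. Pstar x y)" unfolding P_def su ..
      finally show ?thesis using G(2) by simp
    qed
    show "(\<Sum>x\<in>UNIV. \<Sum>u<?n. P x u y) = \<psi> y" for y
      unfolding P_def su by (rule G(3))
    have "(\<Sum>x\<in>UNIV. \<Sum>u<?n. \<Sum>y\<in>UNIV. P x u y * \<rho> x y) = (\<Sum>x\<in>UNIV. \<Sum>y\<in>UNIV. \<Sum>u<?n. P x u y * \<rho> x y)"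
      by (intro sum.cong refl) (rule sum.swap)
    also have "\<dots> = (\<Sum>x\<in>UNIV. \<Sum>y\<in>UNIV. Pstar x y * \<rho> x y)"
    proof (intro sum.cong refl)
      fix x y
      have "(\<Sum>u<?n. P x u y * \<rho> x y) = (\<Sum>u<?n. if u = h y then Pstar x y * \<rho> x y else 0)"
        unfolding P_def by (intro sum.cong refl) simp
      then show "(\<Sum>u<?n. P x u y * \<rho> x y) = Pstar x y * \<rho> x y" unfolding su .
    qed
    finally show "(\<Sum>x\<in>UNIV. \<Sum>u<?n. \<Sum>y\<in>UNIV. P x u y * \<rho> x y) \<le> D" using G(4) by simp
    show "P x u y * marg_U P u = marg_XU P x u * marg_UY P u y" for x u y
    proof (cases "u \<in> range h")
      case True
      then obtain y0 where u: "u = h y0" by auto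
      show ?thesis unfolding u mU_h mXU_h mUY_h unfolding P_def heq by auto
    next
      case False
      then show ?thesis using mU_o mXU_o by simp
    qed
  qed
  have pos: "0 < \<mu> x \<and> 0 < \<psi> y" if "0 < Pstar x y" for x y
  proof -
    have "Pstar x y \<le> \<mu> x" unfolding G(2)[of x, symmetric] by (rule member_le_sum) (use G(1) in auto)
    moreover have "Pstar x y \<le> \<psi> y" unfolding G(3)[of y, symmetric] by (rule member_le_sum) (use G(1) in auto)
    ultimately show ?thesis using that by linarith
  qed
  have IU: "mutual_info UNIV {..<?n} (marg_XU P) = mutual_info UNIV UNIV Pstar"
    unfolding mi_XU[OF PM] mi_G[OF PG]
  proof (intro sum.cong refl)
    fix x
    show "(\<Sum>u<?n. marg_XU P x u * log 2 (marg_XU P x u / (\<mu> x * marg_U P u)))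
        = (\<Sum>y\<in>UNIV. Pstar x y * log 2 (Pstar x y / (\<mu> x * \<psi> y)))"
      by (subst sum_reidx[OF inj hlt]) (simp_all add: mXU_o mXU_h mU_h)
  qed
  have HY: "mutual_info {..<?n} UNIV (marg_UY P) = (\<Sum>y\<in>UNIV. \<psi> y * log 2 (\<psi> y / (\<psi> y * \<psi> y)))"
    unfolding mi_UY[OF PM]
  proof (subst sum_reidx[OF inj hlt])
    show "(\<Sum>y\<in>UNIV. marg_UY P u y * log 2 (marg_UY P u y / (marg_U P u * \<psi> y))) = 0"
      if "u \<notin> range h" for u using that by (simp add: mUY_o)
    show "(\<Sum>y0\<in>UNIV. \<Sum>y\<in>UNIV. marg_UY P (h y0) y * log 2 (marg_UY P (h y0) y / (marg_U P (h y0) * \<psi> y)))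
      = (\<Sum>y\<in>UNIV. \<psi> y * log 2 (\<psi> y / (\<psi> y * \<psi> y)))"
    proof (intro sum.cong refl)
      fix y0
      have "(\<Sum>y\<in>UNIV. marg_UY P (h y0) y * log 2 (marg_UY P (h y0) y / (marg_U P (h y0) * \<psi> y)))
          = (\<Sum>y\<in>UNIV. if y = y0 then \<psi> y0 * log 2 (\<psi> y0 / (\<psi> y0 * \<psi> y0)) else 0)"
        unfolding mUY_h mU_h by (intro sum.cong refl) simp
      then show "(\<Sum>y\<in>UNIV. marg_UY P (h y0) y * log 2 (marg_UY P (h y0) y / (marg_U P (h y0) * \<psi> y)))
          = \<psi> y0 * log 2 (\<psi> y0 / (\<psi> y0 * \<psi> y0))" by simp
    qed
  qed
  have CE: "cond_entropy Pstar = - (\<Sum>x\<in>UNIV. \<Sum>y\<in>UNIV. Pstar x y * log 2 (Pstar x y / \<mu> x))"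
    unfolding ce_simp[of Pstar, OF allI[OF allI[OF G(1)]]] G(2) ..
  have pt: "Pstar x y * log 2 (Pstar x y / (\<mu> x * \<psi> y)) - Pstar x y * log 2 (Pstar x y / \<mu> x)
      = Pstar x y * log 2 (\<psi> y / (\<psi> y * \<psi> y))" for x y
  proof (cases "Pstar x y > 0")
    case True
    with pos[OF True] show ?thesis by (simp add: log_divide_pos log_mult_pos algebra_simps)
  next
    case False
    then have "Pstar x y = 0" using G(1)[of x y] by simp
    then show ?thesis by simp
  qed
  have "mutual_info UNIV UNIV Pstar + cond_entropy Pstar
      = (\<Sum>x\<in>UNIV. \<Sum>y\<in>UNIV. Pstar x y * log 2 (Pstar x y / (\<mu> x * \<psi> y)) - Pstar x y * log 2 (Pstar x y / \<mu> x))"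
    unfolding mi_G[OF PG] CE by (simp add: sum_subtractf)
  also have "\<dots> = (\<Sum>x\<in>UNIV. \<Sum>y\<in>UNIV. Pstar x y * log 2 (\<psi> y / (\<psi> y * \<psi> y)))"
    unfolding pt ..
  also have "\<dots> = (\<Sum>y\<in>UNIV. \<Sum>x\<in>UNIV. Pstar x y * log 2 (\<psi> y / (\<psi> y * \<psi> y)))"
    by (rule sum.swap)
  also have "\<dots> = (\<Sum>y\<in>UNIV. \<psi> y * log 2 (\<psi> y / (\<psi> y * \<psi> y)))"
    by (intro sum.cong refl) (simp add: sum_distrib_right[symmetric] G(3))
  finally have "mutual_info {..<?n} UNIV (marg_UY P) = mutual_info UNIV UNIV Pstar + cond_entropy Pstar"
    using HY by simp
  with IU PM show ?thesis by blast
qed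

theorem mainTheorem8:
  fixes \<rho> :: "'a::finite \<Rightarrow> 'a \<Rightarrow> real"
    and \<mu> \<psi> :: "'a \<Rightarrow> real"
    and D :: real
    and Pstar :: "'a \<Rightarrow> 'a \<Rightarrow> real"
  assumes rho_nonneg: "\<forall>x y. 0 \<le> \<rho> x y"
    and mu: "is_dist \<mu>" and psi: "is_dist \<psi>"
    and D: "0 \<le> D"
    and G_ne: "G_set \<rho> \<mu> \<psi> D \<noteq> {}"
    and Pstar_in: "Pstar \<in> G_set \<rho> \<mu> \<psi> D"
    and Pstar_min: "\<forall>P\<in>G_set \<rho> \<mu> \<psi> D. mutual_info UNIV UNIV Pstar \<le> mutual_info UNIV UNIV P"
  shows "\<forall>Rc. Rc \<ge> cond_entropy Pstar \<longrightarrow>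
           (mutual_info UNIV UNIV Pstar \<in> {R. (R, Rc) \<in> L_set \<rho> \<mu> \<psi> D}
            \<and> (\<forall>R\<in>{R. (R, Rc) \<in> L_set \<rho> \<mu> \<psi> D}. mutual_info UNIV UNIV Pstar \<le> R)
            \<and> {R. (R, Rc) \<in> L_set \<rho> \<mu> \<psi> D} = {R. R \<ge> mutual_info UNIV UNIV Pstar}
            \<and> {R. \<exists>Rc'. (R, Rc') \<in> L_set \<rho> \<mu> \<psi> D} = {R. R \<ge> mutual_info UNIV UNIV Pstar})"
  proof (intro allI impI)
  fix Rc assume Rc: "cond_entropy Pstar \<le> Rc"
  let ?I = "mutual_info UNIV UNIV Pstar"
  let ?L = "L_set \<rho> \<mu> \<psi> D"
  obtain P0 where P0: "P0 \<in> M_set \<rho> \<mu> \<psi> D"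
    and e1: "mutual_info UNIV {..<u_bound TYPE('a)} (marg_XU P0) = ?I"
    and e2: "mutual_info {..<u_bound TYPE('a)} UNIV (marg_UY P0) = ?I + cond_entropy Pstar"
    using achiev[OF Pstar_in] by blast
  have ach: "(R, Rc) \<in> ?L" if "?I \<le> R" for R
    unfolding L_set_def using P0 e1 e2 that Rc by force
  have conv: "?I \<le> R" if "(R, Rc') \<in> ?L" for R Rc'
  proof -
    from that obtain P where PM: "P \<in> M_set \<rho> \<mu> \<psi> D"
      and R: "mutual_info UNIV {..<u_bound TYPE('a)} (marg_XU P) \<le> R"
      unfolding L_set_def by blast
    note C = converse[OF PM mu psi]
    have "?I \<le> mutual_info UNIV UNIV (\<lambda>x y. \<Sum>u<u_bound TYPE('a). P x u y)"
      using Pstar_min C(1) by blast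
    then show ?thesis using C(2) R by linarith
  qed
  have s1: "{R. (R, Rc) \<in> ?L} = {R. R \<ge> ?I}" using ach conv by blast
  have s2: "{R. \<exists>Rc'. (R, Rc') \<in> ?L} = {R. R \<ge> ?I}" using ach conv by blast
  show "?I \<in> {R. (R, Rc) \<in> ?L} \<and> (\<forall>R\<in>{R. (R, Rc) \<in> ?L}. ?I \<le> R)
      \<and> {R. (R, Rc) \<in> ?L} = {R. R \<ge> ?I} \<and> {R. \<exists>Rc'. (R, Rc') \<in> ?L} = {R. R \<ge> ?I}"
    using s1 s2 ach conv by auto
qed

end
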